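(* If $q$ is a power of an odd prime, then $\chi(G_{q^3})\le 6q^2$; consequently $\chi(ER_{q^3})\le 6q^2+1$.
   Context: For a power $Q$ of an odd prime, the graph $G_Q$ has vertex set $\mathbb{F}_Q\times\mathbb{F}_Q$, and distinct vertices $(x_1,x_2)$, $(y_1,y_2)$ are adjacent if and only if $(x_1+y_1)^2=x_2+y_2$; $G_Q$ has no loops. $ER_Q$ is the graph whose vertices are the $1$-dimensional subspaces of $\mathbb{F}_Q^3$, where distinct vertices $(x_0,x_1,x_2)$, $(y_0,y_1,y_2)$ (homogeneous coordinates) are adjacent if and only if $x_0y_0+x_1y_1+x_2y_2=0$. $\chi$ denotes the chromatic number. *)

theory Defs
  imports "HOL-Computational_Algebra.Primes"
begin

definition colorable :: "'v set \<Rightarrow> ('v \<Rightarrow> 'v \<Rightarrow> bool) \<Rightarrow> nat \<Rightarrow> bool" where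
  "colorable V E n \<longleftrightarrow>
     (\<exists>f :: 'v \<Rightarrow> nat. (\<forall>v\<in>V. f v < n) \<and> (\<forall>u\<in>V. \<forall>v\<in>V. E u v \<longrightarrow> f u \<noteq> f v))"

definition chromatic_number :: "'v set \<Rightarrow> ('v \<Rightarrow> 'v \<Rightarrow> bool) \<Rightarrow> nat" where
  "chromatic_number V E = (LEAST n. colorable V E n)"

definition G_adj :: "('a::field \<times> 'a) \<Rightarrow> ('a \<times> 'a) \<Rightarrow> bool" where
  "G_adj x y \<longleftrightarrow> x \<noteq> y \<and> (fst x + fst y)^2 = snd x + snd y"

definition dot3 :: "('a::field \<times> 'a \<times> 'a) \<Rightarrow> ('a \<times> 'a \<times> 'a) \<Rightarrow> 'a" where
  "dot3 x y = fst x * fst y + fst (snd x) * fst (snd y) + snd (snd x) * snd (snd y)"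

definition line3 :: "('a::field \<times> 'a \<times> 'a) \<Rightarrow> ('a \<times> 'a \<times> 'a) set" where
  "line3 v = {(c * fst v, c * fst (snd v), c * snd (snd v)) | c. True}"

definition ER_vertices :: "('a::field \<times> 'a \<times> 'a) set set" where
  "ER_vertices = {line3 v | v. v \<noteq> (0, 0, 0)}"

definition ER_adj :: "('a::field \<times> 'a \<times> 'a) set \<Rightarrow> ('a \<times> 'a \<times> 'a) set \<Rightarrow> bool" where
  "ER_adj X Y \<longleftrightarrow> X \<noteq> Y \<and> (\<forall>x\<in>X. \<forall>y\<in>Y. dot3 x y = 0)"

end

theory Submission
  imports Defs "HOL-Computational_Algebra.Polynomial"
begin


lemma arith_aux: "y \<le> (x::nat) \<Longrightarrow> 3 * q \<le> x \<Longrightarrow> 3 \<le> (q::nat) \<Longrightarrow> 3 + y + 2 * (x + q + 1) \<le> 6 * x"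
  by presburger

definition Kq :: "nat \<Rightarrow> 'a::field set" where "Kq q = {x. x^q = x}"

context
  fixes p k q :: nat
  assumes pr: "prime p" and oddp: "odd p" and k1: "k \<ge> 1" and qdef: "q = p^k"
    and cardF: "card (UNIV :: 'a::{field,finite} set) = q^3"
begin

lemma ofnat_card: "of_nat (card (UNIV::'a set)) = (0::'a)"
proof -
  have "(\<Sum>y\<in>UNIV. y) = (\<Sum>y\<in>UNIV. y + (1::'a))"
  proof -
    have r: "(\<lambda>y. y + (1::'a)) ` UNIV = UNIV"
    proof (intro set_eqI iffI)
      fix x :: 'a show "x \<in> range (\<lambda>y. y + 1)" by (rule image_eqI[of _ _ "x - 1"]) auto
    qed auto
    have "sum (\<lambda>y. y) ((\<lambda>y. y + (1::'a)) ` UNIV) = sum ((\<lambda>y. y) \<circ> (\<lambda>y. y + 1)) UNIV"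
      by (rule sum.reindex) (simp add: inj_def)
    thus ?thesis using r by (simp add: comp_def)
  qed
  also have "\<dots> = (\<Sum>y\<in>UNIV. y) + of_nat (card (UNIV::'a set))" by (simp add: sum.distrib)
  finally show ?thesis by simp
qed

lemma charp: "CHAR('a) = p"
proof -
  have "CHAR('a) dvd p^(k*3)" using ofnat_card cardF qdef of_nat_eq_0_iff_char_dvd
    by (metis power_mult)
  moreover have "prime CHAR('a)"
    using prime_CHAR_semidom finite_imp_CHAR_pos[OF finite_UNIV] by blast
  ultimately have "CHAR('a) dvd p" using prime_dvd_power by blast
  thus ?thesis using pr \<open>prime CHAR('a)\<close> by (simp add: primes_dvd_imp_eq)
qed

lemma frob_add: "((x::'a) + y)^q = x^q + y^q"
  using freshmans_dream'[where m=q and n=k and x=x and y=y] charp qdef pr by simp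

lemma q_odd: "odd q" using oddp qdef by simp
lemma p_ge3: "p \<ge> 3" using prime_ge_2_nat[OF pr] oddp by (cases "p = 2") auto

lemma q_ge3: "q \<ge> 3"
proof -
  have "p \<ge> 3" using prime_ge_2_nat[OF pr] oddp by (cases "p = 2") auto
  moreover have "p^1 \<le> p^k" using k1 prime_gt_1_nat[OF pr] by (intro power_increasing) auto
  ultimately show ?thesis using qdef by simp
qed

lemma frob_neg: "(- (x::'a))^q = - (x^q)" using q_odd by (simp add: power_minus_odd)

lemma two_nz: "(2::'a) \<noteq> 0"
proof
  assume "(2::'a) = 0"
  hence "of_nat 2 = (0::'a)" by simp
  hence "p dvd 2" using charp of_nat_eq_0_iff_char_dvd by metis
  hence "p \<le> 2" by (simp add: dvd_imp_le)
  thus False using p_ge3 by simp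
qed

lemma pow_card: "(x::'a)^(q^3) = x"
proof (cases "x = 0")
  case True thus ?thesis using q_ge3 by simp
next
  case False
  let ?S = "UNIV - {0::'a}"
  have "(\<Prod>y\<in>?S. y) = (\<Prod>y\<in>?S. x * y)"
  proof -
    have "(\<lambda>y. x * y) ` ?S = ?S"
    proof
      show "(\<lambda>y. x * y) ` ?S \<subseteq> ?S" using False by auto
      show "?S \<subseteq> (\<lambda>y. x * y) ` ?S"
      proof
        fix y assume "y \<in> ?S"
        hence "y / x \<in> ?S" "y = x * (y / x)" using False by auto
        thus "y \<in> (\<lambda>y. x * y) ` ?S" by blast
      qed
    qed
    moreover have "prod (\<lambda>y. y) ((\<lambda>y. x * y) ` ?S) = prod ((\<lambda>y. y) \<circ> (\<lambda>y. x * y)) ?S"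
      by (rule prod.reindex) (use False in \<open>simp add: inj_on_def\<close>)
    ultimately show ?thesis by (simp add: comp_def)
  qed
  also have "\<dots> = x ^ card ?S * (\<Prod>y\<in>?S. y)" by (simp add: prod.distrib)
  finally have "x ^ card ?S = 1" by simp
  moreover have "card ?S = q^3 - 1" using cardF by (simp add: card_Diff_singleton)
  ultimately have "x^(q^3 - 1) = 1" by simp
  moreover have "q^3 = Suc (q^3 - 1)" using q_ge3 by simp
  ultimately show ?thesis by (metis mult.right_neutral power_Suc)
qed

lemma frob_mult: "((x::'a) * y)^q = x^q * y^q" by (simp add: power_mult_distrib)

lemma K_0: "0 \<in> (Kq q :: 'a set)" using q_ge3 by (simp add: Kq_def)
lemma K_1: "1 \<in> (Kq q :: 'a set)" by (simp add: Kq_def)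
lemma K_add: "x \<in> Kq q \<Longrightarrow> y \<in> Kq q \<Longrightarrow> (x::'a) + y \<in> Kq q" by (simp add: Kq_def frob_add)
lemma K_mult: "x \<in> Kq q \<Longrightarrow> y \<in> Kq q \<Longrightarrow> (x::'a) * y \<in> Kq q" by (simp add: Kq_def frob_mult)
lemma K_uminus: "x \<in> Kq q \<Longrightarrow> - (x::'a) \<in> Kq q" by (simp add: Kq_def frob_neg)
lemma K_diff: "x \<in> Kq q \<Longrightarrow> y \<in> Kq q \<Longrightarrow> (x::'a) - y \<in> Kq q"
  using K_add[of x "-y"] K_uminus[of y] by simp
lemma K_inverse: "x \<in> Kq q \<Longrightarrow> inverse (x::'a) \<in> Kq q" by (simp add: Kq_def power_inverse)
lemma K_divide: "x \<in> Kq q \<Longrightarrow> y \<in> Kq q \<Longrightarrow> (x::'a) / y \<in> Kq q"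
  using K_mult[of x "inverse y"] K_inverse[of y] by (simp add: divide_inverse)
lemma K_2: "(2::'a) \<in> Kq q" using K_add[OF K_1 K_1] by (simp add: one_add_one)

lemma pow3: "(((x::'a)^q)^q)^q = x"
proof -
  have "(((x::'a)^q)^q)^q = x^(q^3)" by (simp only: power_mult[symmetric] power3_eq_cube)
  thus ?thesis using pow_card[of x] by simp
qed

lemma quad_in_K:
  assumes c0: "c0 \<in> Kq q" and c1: "c1 \<in> Kq q" and eq: "(u::'a)^2 + c1 * u + c0 = 0"
  shows "u \<in> Kq q"
proof -
  let ?v = "u^q"
  have c0q: "c0^q = c0" and c1q: "c1^q = c1" using c0 c1 by (auto simp: Kq_def)
  have "(u^2 + c1 * u + c0)^q = 0" using eq q_ge3 by simp
  hence v: "?v^2 + c1 * ?v + c0 = 0"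
    by (simp add: frob_add frob_mult c0q c1q power_mult[symmetric] mult.commute)
  have "(?v - u) * (?v - (- c1 - u)) = (?v^2 + c1 * ?v + c0) - (u^2 + c1*u + c0)"
    by (simp add: algebra_simps power2_eq_square)
  hence "(?v - u) * (?v - (- c1 - u)) = 0" using v eq by simp
  hence "?v = u \<or> ?v = - c1 - u" by simp
  thus ?thesis
  proof
    assume "?v = u" thus ?thesis by (simp add: Kq_def)
  next
    assume h: "?v = - c1 - u"
    have "(?v)^q = (- c1 - u)^q" using h by simp
    also have "\<dots> = - c1 - ?v" using frob_add[of "-c1" "-u"] frob_neg c1q by simp
    also have "\<dots> = u" using h by simp
    finally have "((u^q)^q)^q = u^q" by simp
    thus ?thesis using pow3[of u] by (simp add: Kq_def)
  qed
qed

lemma card_K_le: "card (Kq q :: 'a set) \<le> q"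
proof -
  let ?P = "monom (1::'a) q - monom 1 1"
  have nz: "?P \<noteq> 0"
  proof
    assume "?P = 0"
    hence "coeff ?P q = 0" by simp
    thus False using q_ge3 by (simp add: coeff_monom)
  qed
  have "Kq q \<subseteq> {x. poly ?P x = 0}" by (auto simp: Kq_def poly_monom)
  hence "card (Kq q :: 'a set) \<le> card {x. poly ?P x = 0}" by (intro card_mono) auto
  also have "\<dots> \<le> degree ?P" by (rule card_poly_roots_bound[OF nz])
  also have "\<dots> \<le> q" using q_ge3 by (intro degree_diff_le) (auto intro: order.trans[OF degree_monom_le])
  finally show ?thesis .
qed

definition trace :: "'a \<Rightarrow> 'a" where "trace x = x + x^q + (x^q)^q"

lemma trace_K: "trace x \<in> Kq q"
  using pow3[of x] by (simp add: Kq_def trace_def frob_add add.commute add.left_commute)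

lemma card_K_ge: "q \<le> card (Kq q :: 'a set)"
proof -
  have fib: "card {x::'a. trace x = y} \<le> q^2" for y
  proof -
    let ?P = "monom (1::'a) (q^2) + monom 1 q + monom 1 1 - monom y 0"
    have nz: "?P \<noteq> 0"
    proof
      assume "?P = 0"
      hence "coeff ?P (q^2) = 0" by simp
      moreover have "q^2 \<noteq> q" "q^2 \<noteq> 1" "q^2 \<noteq> 0" using q_ge3 by (auto simp: power2_eq_square)
      ultimately show False by (simp add: coeff_monom)
    qed
    have "{x::'a. trace x = y} \<subseteq> {x. poly ?P x = 0}"
      by (auto simp: trace_def poly_monom power_mult[symmetric] power2_eq_square)
    hence "card {x::'a. trace x = y} \<le> card {x. poly ?P x = 0}" by (intro card_mono) auto
    also have "\<dots> \<le> degree ?P" by (rule card_poly_roots_bound[OF nz])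
    also have "\<dots> \<le> q^2" using q_ge3
      by (intro degree_diff_le degree_add_le) (auto intro: order.trans[OF degree_monom_le] simp: power2_eq_square)
    finally show ?thesis .
  qed
  have "(UNIV::'a set) = (\<Union>y\<in>Kq q. {x. trace x = y})" using trace_K by auto
  hence "card (UNIV::'a set) \<le> (\<Sum>y\<in>Kq q. card {x::'a. trace x = y})"
    by (metis card_UN_le finite)
  also have "\<dots> \<le> (\<Sum>y\<in>(Kq q::'a set). q^2)" by (rule sum_mono) (rule fib)
  also have "\<dots> = card (Kq q :: 'a set) * q^2" by simp
  finally have "q^2 * q \<le> q^2 * card (Kq q :: 'a set)" using cardF by (simp add: power3_eq_cube power2_eq_square mult.commute mult.left_commute)
  thus ?thesis using q_ge3 by simp
qed

lemma card_K: "card (Kq q :: 'a set) = q" using card_K_le card_K_ge by simp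
thm card_K quad_in_K


definition rep :: "'a \<Rightarrow> 'a" where "rep a = (SOME l. l \<noteq> 0 \<and> l / a \<in> Kq q)"

lemma rep_props: assumes "(a::'a) \<noteq> 0" shows "rep a \<noteq> 0" "rep a / a \<in> Kq q"
proof -
  have "\<exists>l. l \<noteq> 0 \<and> l / a \<in> Kq q" using assms K_1 by (intro exI[of _ a]) simp
  hence "rep a \<noteq> 0 \<and> rep a / a \<in> Kq q" unfolding rep_def by (rule someI_ex)
  thus "rep a \<noteq> 0" "rep a / a \<in> Kq q" by auto
qed

lemma rep_inv: assumes "(a::'a) \<noteq> 0" shows "a / rep a \<in> Kq q"
  using K_inverse[OF rep_props(2)[OF assms]] by simp

lemma rep_eq: assumes "(a::'a) \<noteq> 0" "b \<noteq> 0" "a / b \<in> Kq q" shows "rep a = rep b"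
proof -
  have "b / a \<in> Kq q" using K_inverse[OF assms(3)] by simp
  have "(\<lambda>l. l \<noteq> 0 \<and> l / a \<in> Kq q) = (\<lambda>l. l \<noteq> 0 \<and> l / b \<in> Kq q)"
  proof (intro ext iffI)
    fix l assume h: "l \<noteq> 0 \<and> l / a \<in> Kq q"
    have "l / b = (l / a) * (a / b)" using assms by simp
    moreover have "(l / a) * (a / b) \<in> Kq q" using h assms(3) K_mult by blast
    ultimately show "l \<noteq> 0 \<and> l / b \<in> Kq q" using h by metis
  next
    fix l assume h: "l \<noteq> 0 \<and> l / b \<in> Kq q"
    have "l / a = (l / b) * (b / a)" using assms by simp
    moreover have "(l / b) * (b / a) \<in> Kq q" using h \<open>b / a \<in> Kq q\<close> K_mult by blast
    ultimately show "l \<noteq> 0 \<and> l / a \<in> Kq q" using h by metis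
  qed
  thus ?thesis unfolding rep_def by simp
qed

lemma rep_rep: assumes "(a::'a) \<noteq> 0" shows "rep (rep a) = rep a"
  using rep_eq[OF rep_props(1)[OF assms] assms rep_props(2)[OF assms]] .

lemma rep_same: assumes "(a::'a) \<noteq> 0" "b \<noteq> 0" "rep a = rep b" shows "a / b \<in> Kq q"
proof -
  have "a / b = (a / rep a) / (b / rep b)" using assms rep_props(1)[OF assms(1)] by simp
  thus ?thesis using K_divide[OF rep_inv[OF assms(1)] rep_inv[OF assms(2)]] by simp
qed

definition mm :: "('a \<Rightarrow> nat) \<Rightarrow> 'a \<Rightarrow> 'a \<Rightarrow> nat" where
  "mm \<iota> l z = Min (\<iota> ` {w. (w - z) / l^2 \<in> Kq q})"

definition col :: "('a \<Rightarrow> nat) \<Rightarrow> 'a \<Rightarrow> 'a \<Rightarrow> nat \<times> 'a \<times> 'a" where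
  "col \<iota> a z = (if a = 0 then (if z = 0 then (0,0,0) else if \<iota> z < \<iota> (-z) then (1,0,0) else (2,0,0))
     else (if z / (rep a)^2 \<in> Kq q then (3, a / rep a, z / (rep a)^2)
       else if mm \<iota> (rep a) z < mm \<iota> (rep a) (-z) then (4, rep a, 0) else (5, rep a, 0)))"

lemma col_fst: "fst (col \<iota> a z) < 3 \<longleftrightarrow> a = 0"
  by (simp add: col_def)

lemma mm_cong: assumes "(x - y) / l^2 \<in> Kq q" shows "mm \<iota> l x = mm \<iota> l (y::'a)"
proof -
  have "{w. (w - x) / l^2 \<in> Kq q} = {w. (w - y) / l^2 \<in> Kq q}"
  proof (intro set_eqI iffI; simp)
    fix w
    have e1: "(w - y) / l^2 = (w - x) / l^2 + (x - y) / l^2" by (simp add: diff_divide_distrib)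
    have e2: "(w - x) / l^2 = (w - y) / l^2 - (x - y) / l^2" by (simp add: diff_divide_distrib)
    show "(w - x) / l^2 \<in> Kq q \<Longrightarrow> (w - y) / l^2 \<in> Kq q" using e1 K_add assms by metis
    show "(w - y) / l^2 \<in> Kq q \<Longrightarrow> (w - x) / l^2 \<in> Kq q" using e2 K_diff assms by metis
  qed
  thus ?thesis by (simp add: mm_def)
qed

lemma mm_eq_imp:
  assumes inj: "inj \<iota>" and eq: "mm \<iota> l z = mm \<iota> l (-z)" and l: "l \<noteq> 0"
  shows "z / l^2 \<in> Kq (q::nat)"
proof -
  let ?S = "\<lambda>x. {w. (w - x) / l^2 \<in> Kq q}"
  have ne: "\<iota> ` ?S x \<noteq> {}" for x
  proof -
    have "x \<in> ?S x" using K_0 by simp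
    thus ?thesis by blast
  qed
  have "mm \<iota> l z \<in> \<iota> ` ?S z" unfolding mm_def by (rule Min_in[OF _ ne]) simp
  then obtain y1 where y1: "(y1 - z) / l^2 \<in> Kq q" "\<iota> y1 = mm \<iota> l z" by auto
  have "mm \<iota> l (-z) \<in> \<iota> ` ?S (-z)" unfolding mm_def by (rule Min_in[OF _ ne]) simp
  then obtain y2 where y2: "(y2 + z) / l^2 \<in> Kq q" "\<iota> y2 = mm \<iota> l (-z)" by auto
  have "\<iota> y1 = \<iota> y2" using y1(2) y2(2) eq by simp
  hence "y1 = y2" by (rule injD[OF inj])
  have d: "(y2 + z) / l^2 - (y1 - z) / l^2 \<in> Kq q" by (rule K_diff[OF y2(1) y1(1)])
  have "(y2 + z) / l^2 - (y1 - z) / l^2 = 2 * (z / l^2)"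
  proof -
    have "(y2 + z) / l^2 - (y1 - z) / l^2 = ((y2 + z) - (y1 - z)) / l^2" by (rule diff_divide_distrib[symmetric])
    also have "(y2 + z) - (y1 - z) = 2 * z" using \<open>y1 = y2\<close> by (simp add: algebra_simps mult_2)
    finally show ?thesis by simp
  qed
  hence "2 * (z / l^2) \<in> Kq q" using d by simp
  hence "(2 * (z / l^2)) / 2 \<in> Kq q" by (rule K_divide[OF _ K_2])
  thus ?thesis using two_nz by simp
qed

lemma core_proper:
  assumes inj: "inj \<iota>" and adj: "z + w = a * (b::'a)" and ne: "(a, z) \<noteq> (b, w)"
  shows "col \<iota> a z \<noteq> col \<iota> b w"
proof
  assume eq: "col \<iota> a z = col \<iota> b w"
  show False
  proof (cases "a = 0")
    case a0: True
    hence b0: "b = 0" using eq col_fst[of \<iota> a z] col_fst[of \<iota> b w] by metis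
    hence w: "w = - z" using adj a0 by (simp add: eq_neg_iff_add_eq_0 add.commute)
    have z0: "z \<noteq> 0" using ne a0 b0 w by auto
    have "\<iota> z \<noteq> \<iota> (-z)"
    proof
      assume "\<iota> z = \<iota> (-z)"
      hence "z = -z" using inj by (metis injD)
      hence "2 * z = 0" by simp
      thus False using z0 two_nz by simp
    qed
    thus False using eq a0 b0 w z0 by (auto simp: col_def split: if_splits)
  next
    case an0: False
    hence bn0: "b \<noteq> 0" using eq col_fst[of \<iota> a z] col_fst[of \<iota> b w] by metis
    define l where "l = rep a"
    define m where "m = rep b"
    have l0: "l \<noteq> 0" and m0: "m \<noteq> 0" using rep_props an0 bn0 by (auto simp: l_def m_def)
    have al: "a / l \<in> Kq q" and bm: "b / m \<in> Kq q" using rep_inv an0 bn0 by (auto simp: l_def m_def)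
    show False
    proof (cases "z / l^2 \<in> Kq q")
      case zK: True
      hence wK: "w / m^2 \<in> Kq q" and e1: "a / l = b / m" and e2: "z / l^2 = w / m^2"
        using eq an0 bn0 by (auto simp: col_def l_def m_def split: if_splits)
      show False
      proof (cases "l = m")
        case True
        thus False using e1 e2 l0 ne by (auto simp: field_simps)
      next
        case lm: False
        define \<alpha> where "\<alpha> = a / l"
        define \<tau> where "\<tau> = z / l^2"
        define u where "u = l / m"
        have a': "a = \<alpha> * l" and b': "b = \<alpha> * m" and z': "z = \<tau> * l^2" and w': "w = \<tau> * m^2"
          using e1 e2 l0 m0 by (auto simp: \<alpha>_def \<tau>_def field_simps)
        have \<alpha>0: "\<alpha> \<noteq> 0" using an0 a' by auto
        have key: "\<tau> * l^2 + \<tau> * m^2 = \<alpha>^2 * l * m" using adj a' b' z' w' by (simp add: power2_eq_square mult_ac)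
        have \<tau>0: "\<tau> \<noteq> 0"
        proof
          assume "\<tau> = 0" thus False using key \<alpha>0 l0 m0 by simp
        qed
        have "\<tau> * m^2 * (u^2 + (- (\<alpha>^2 / \<tau>)) * u + 1) = \<tau> * l^2 + \<tau> * m^2 - \<alpha>^2 * l * m"
          using \<tau>0 m0 by (simp add: u_def field_simps power2_eq_square)
        hence "u^2 + (- (\<alpha>^2 / \<tau>)) * u + 1 = 0" using key \<tau>0 m0 by simp
        moreover have "- (\<alpha>^2 / \<tau>) \<in> Kq q"
        proof -
          have \<alpha>K: "\<alpha> \<in> Kq q" using al \<alpha>_def by simp
          have \<tau>K: "\<tau> \<in> Kq q" using zK \<tau>_def by simp
          show ?thesis using K_uminus[OF K_divide[OF K_mult[OF \<alpha>K \<alpha>K] \<tau>K]] by (simp add: power2_eq_square)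
        qed
        ultimately have "u \<in> Kq q" using quad_in_K[OF K_1] by blast
        hence "rep l = rep m" using rep_eq l0 m0 by (simp add: u_def)
        thus False using lm rep_rep an0 bn0 by (simp add: l_def m_def)
      qed
    next
      case zK: False
      have lm: "l = m" and wK: "w / l^2 \<notin> Kq q"
        using eq an0 bn0 zK by (auto simp: col_def l_def m_def split: if_splits)
      have e: "(w - (-z)) / l^2 = (a / l) * (b / l)" using adj by (simp add: power2_eq_square add.commute)
      have s0: "(a / l) * (b / l) \<in> Kq q" by (rule K_mult[OF al]) (use bm lm in simp)
      have s: "(w - (-z)) / l^2 \<in> Kq q" by (subst e) (rule s0)
      have s2: "((-w) - z) / l^2 \<in> Kq q" proof -
        have "((-w) - z) / l^2 = - ((w - (-z)) / l^2)" by (simp add: minus_divide_left algebra_simps)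
        thus ?thesis using K_uminus[OF s] by simp
      qed
      have mw: "mm \<iota> l w = mm \<iota> l (-z)" by (rule mm_cong[OF s])
      have mw2: "mm \<iota> l (-w) = mm \<iota> l z" by (rule mm_cong[OF s2])
      have "mm \<iota> l z \<noteq> mm \<iota> l (-z)" using mm_eq_imp[OF inj _ l0] zK by blast
      thus False using eq an0 bn0 zK wK lm mw mw2
        by (auto simp: col_def l_def m_def split: if_splits)
    qed
  qed
qed



definition Rset :: "'a set" where "Rset = rep ` (UNIV - {0})"

definition Cset :: "(nat \<times> 'a \<times> 'a) set" where
  "Cset = {(0,0,0),(1,0,0),(2,0,0)} \<union> ({3} \<times> ((Kq q - {0}) \<times> Kq q)) \<union> ({4,5} \<times> (Rset \<times> {0}))"

lemma col_in: "col \<iota> (a::'a) z \<in> Cset"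
proof (cases "a = 0")
  case True thus ?thesis by (auto simp: col_def Cset_def)
next
  case False
  have "a / rep a \<in> Kq q" "a / rep a \<noteq> 0" using rep_inv[OF False] rep_props[OF False] False by auto
  moreover have "rep a \<in> Rset" using False by (auto simp: Rset_def)
  ultimately show ?thesis using False by (auto simp: col_def Cset_def)
qed

lemma card_Rset: "card (Rset::'a set) * (q - 1) = q^3 - 1"
proof -
  define C where "C l = {a::'a. a \<noteq> 0 \<and> rep a = l}" for l
  have U: "UNIV - {0} = (\<Union>l\<in>Rset. C l)" by (auto simp: C_def Rset_def)
  have cC: "card (C l) = q - 1" if "l \<in> Rset" for l
  proof -
    from that obtain a0 where a0: "a0 \<noteq> 0" "l = rep a0" by (auto simp: Rset_def)
    have l0: "l \<noteq> 0" using rep_props a0 by simp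
    have rl: "rep l = l" using rep_rep a0 by simp
    have "C l = (\<lambda>x. x * l) ` (Kq q - {0})"
    proof (intro set_eqI iffI)
      fix a assume "a \<in> C l"
      hence a: "a \<noteq> 0" "rep a = l" by (auto simp: C_def)
      hence "a / l \<in> Kq q" "a / l \<noteq> 0" "a = (a / l) * l" using rep_inv[of a] l0 by auto
      thus "a \<in> (\<lambda>x. x * l) ` (Kq q - {0})" by blast
    next
      fix a assume "a \<in> (\<lambda>x. x * l) ` (Kq q - {0})"
      then obtain x where x: "x \<in> Kq q" "x \<noteq> 0" "a = x * l" by auto
      have "rep (x * l) = rep l" using x l0 by (intro rep_eq) auto
      thus "a \<in> C l" using x l0 rl by (auto simp: C_def)
    qed
    moreover have "inj_on (\<lambda>x. x * l) (Kq q - {0})" using l0 by (auto simp: inj_on_def)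
    ultimately have "card (C l) = card (Kq q - {0::'a})" by (simp add: card_image)
    also have "\<dots> = q - 1" using card_K K_0 by (simp add: card_Diff_singleton[of "0::'a"])
    finally show ?thesis .
  qed
  have "q^3 - 1 = card (UNIV - {0::'a})" using cardF by (simp add: card_Diff_singleton)
  also have "\<dots> = card (\<Union>l\<in>Rset. C l)" using U by simp
  also have "\<dots> = (\<Sum>l\<in>Rset. card (C l))"
    by (rule card_UN_disjoint) (auto simp: C_def)
  also have "\<dots> = (\<Sum>l\<in>Rset. q - 1)" using cC by simp
  also have "\<dots> = card Rset * (q - 1)" by simp
  finally show ?thesis by simp
qed

lemma card_Rset2: "card (Rset::'a set) = q^2 + q + 1"
proof -
  have "(q^2 + q + 1) * (q - 1) = q^3 - 1"
  proof -
    obtain n where n: "q = Suc n" using q_ge3 by (cases q) auto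
    show ?thesis unfolding n by (simp add: power2_eq_square power3_eq_cube algebra_simps)
  qed
  hence "card (Rset::'a set) * (q - 1) = (q^2 + q + 1) * (q - 1)" using card_Rset by simp
  hence "card (Rset::'a set) = q^2 + q + 1 \<or> q - 1 = 0" by (simp only: mult_cancel2)
  thus ?thesis using q_ge3 by simp
qed

lemma card_Cset: "card (Cset :: (nat \<times> 'a \<times> 'a) set) \<le> 6 * q^2"
proof -
  let ?A = "{(0::nat,0::'a,0::'a),(1,0,0),(2,0,0)}"
  let ?B = "{3::nat} \<times> ((Kq q - {0::'a}) \<times> (Kq q :: 'a set))"
  let ?C = "{4::nat,5} \<times> ((Rset :: 'a set) \<times> {0::'a})"
  have h1: "card Cset \<le> card (?A \<union> ?B) + card ?C" unfolding Cset_def by (rule card_Un_le)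
  have h2: "card (?A \<union> ?B) \<le> card ?A + card ?B" by (rule card_Un_le)
  have h3: "card ?A \<le> 3" by (rule order.trans[OF card_insert_le_m1]) (auto simp: card_insert_if)
  have h4: "card ?B = (q - 1) * q"
    using card_K K_0 by (simp add: card_cartesian_product card_Diff_singleton)
  have h5: "card ?C = 2 * (q^2 + q + 1)"
    using card_Rset2 by (simp add: card_cartesian_product)
  have h6: "(q - 1) * q \<le> q * q" by simp
  have h7: "3 * q \<le> q * q" using q_ge3 by simp
  have "card (Cset :: (nat \<times> 'a \<times> 'a) set) \<le> 3 + (q - 1) * q + 2 * (q^2 + q + 1)"
    using h1 h2 h3 h4 h5 by linarith
  moreover have "3 + (q - 1) * q + 2 * (q^2 + q + 1) \<le> 6 * q^2"
  proof -
    define x where "x = q^2"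
    have "(q - 1) * q \<le> x" "3 * q \<le> x" using h6 h7 by (simp_all add: x_def power2_eq_square)
    thus ?thesis using q_ge3 unfolding x_def[symmetric] by (intro arith_aux) auto
  qed
  ultimately show ?thesis by linarith
qed

lemma core_exists:
  "\<exists>c :: 'a \<Rightarrow> 'a \<Rightarrow> nat. (\<forall>a z. c a z < 6 * q^2) \<and>
     (\<forall>a z b w. z + w = a * b \<and> (a, z) \<noteq> (b, w) \<longrightarrow> c a z \<noteq> c b w)"
proof -
  obtain \<iota> :: "'a \<Rightarrow> nat" and n where "\<iota> ` UNIV = {i. i < n}" "inj_on \<iota> UNIV"
    using finite_imp_inj_to_nat_seg[OF finite_UNIV] by blast
  hence inj: "inj \<iota>" by simp
  have fC: "finite Cset" unfolding Cset_def by (auto simp: Rset_def)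
  obtain e where e: "bij_betw e Cset {0..<card Cset}" using ex_bij_betw_finite_nat[OF fC] by blast
  define c where "c a z = e (col \<iota> a z)" for a z
  have "c a z < 6 * q^2" for a z
  proof -
    have "e (col \<iota> a z) \<in> {0..<card Cset}" using e col_in bij_betwE by blast
    thus ?thesis using card_Cset by (simp add: c_def)
  qed
  moreover have "c a z \<noteq> c b w" if "z + w = a * b" "(a, z) \<noteq> (b, w)" for a z b w
  proof
    assume "c a z = c b w"
    hence "col \<iota> a z = col \<iota> b w" using e col_in unfolding c_def bij_betw_def inj_on_def by blast
    thus False using core_proper[OF inj that] by simp
  qed
  ultimately show ?thesis by blast
qed



lemma two_squares: "\<exists>a b::'a. a^2 + b^2 = -1"
proof -
  let ?S = "range (\<lambda>x::'a. x^2)"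
  have fib: "card {x::'a. x^2 = s} \<le> 2" if "s \<in> ?S" for s
  proof -
    from that obtain r where r: "s = r^2" by auto
    hence "{x::'a. x^2 = s} \<subseteq> {r, -r}" by (auto simp: power2_eq_iff)
    hence "card {x::'a. x^2 = s} \<le> card {r, -r}" by (intro card_mono) auto
    also have "\<dots> \<le> 2" by (simp add: card_insert_if)
    finally show ?thesis .
  qed
  have "(UNIV::'a set) = (\<Union>s\<in>?S. {x. x^2 = s})" by auto
  hence "card (UNIV::'a set) \<le> (\<Sum>s\<in>?S. card {x::'a. x^2 = s})" by (metis card_UN_le finite)
  also have "\<dots> \<le> (\<Sum>s\<in>?S. 2)" by (rule sum_mono) (rule fib)
  also have "\<dots> = 2 * card ?S" by simp
  finally have cS: "q^3 \<le> 2 * card ?S" using cardF by simp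
  let ?T = "(\<lambda>s. -1 - s) ` ?S"
  have cT: "card ?T = card ?S" by (rule card_image) (auto simp: inj_on_def)
  show ?thesis
  proof (rule ccontr)
    assume nt: "\<not> ?thesis"
    have "?S \<inter> ?T = {}"
    proof (intro equals0I)
      fix t assume "t \<in> ?S \<inter> ?T"
      hence tS: "t \<in> ?S" and tT: "t \<in> ?T" by auto
      from tS obtain x :: 'a where x: "t = x^2" by auto
      from tT obtain y :: 'a where y: "t = -1 - y^2" by auto
      from x y have "x^2 = -1 - y^2" by simp
      hence "x^2 + y^2 = -1" by (simp add: algebra_simps)
      thus False using nt by blast
    qed
    hence "card (?S \<union> ?T) = card ?S + card ?T" by (intro card_Un_disjoint) auto
    moreover have "card (?S \<union> ?T) \<le> q^3" using cardF by (metis card_mono finite subset_UNIV)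
    ultimately have "2 * card ?S \<le> q^3" using cT by simp
    hence "2 * card ?S = q^3" using cS by simp
    moreover have "odd (q^3)" using q_odd by simp
    moreover have "even (2 * card ?S)" by simp
    ultimately show False by metis
  qed
qed


end

definition U0 :: "'a::field \<Rightarrow> 'a \<Rightarrow> 'a \<times> 'a \<times> 'a \<Rightarrow> 'a" where
  "U0 a b x = (- a * fst x - b * fst (snd x) + snd (snd x)) / 2"
definition U1 :: "'a::field \<Rightarrow> 'a \<Rightarrow> 'a \<times> 'a \<times> 'a \<Rightarrow> 'a" where
  "U1 a b x = - b * fst x + a * fst (snd x)"
definition U2 :: "'a::field \<Rightarrow> 'a \<Rightarrow> 'a \<times> 'a \<times> 'a \<Rightarrow> 'a" where
  "U2 a b x = a * fst x + b * fst (snd x) + snd (snd x)"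

lemma four_nz: "(2::'a::field) \<noteq> 0 \<Longrightarrow> (4::'a) \<noteq> 0"
proof -
  assume "(2::'a) \<noteq> 0"
  moreover have "(4::'a) = 2 * 2" by simp
  ultimately show ?thesis by (metis no_zero_divisors)
qed

lemma beta_id:
  fixes a b :: "'a::field"
  assumes ab: "a^2 + b^2 = -1" and two: "(2::'a) \<noteq> 0"
  shows "U1 a b x * U1 a b y - U0 a b x * U2 a b y - U2 a b x * U0 a b y = - dot3 x y"
proof -
  obtain x0 x1 x2 where x: "x = (x0, x1, x2)" by (cases x) auto
  obtain y0 y1 y2 where y: "y = (y0, y1, y2)" by (cases y) auto
  have "U1 a b x * U1 a b y - U0 a b x * U2 a b y - U2 a b x * U0 a b y + dot3 x y
      = (a^2 + b^2 + 1) * (x0 * y0 + x1 * y1)"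
    using two four_nz[OF two] by (simp add: x y U0_def U1_def U2_def dot3_def field_simps power2_eq_square)
  also have "\<dots> = 0" using ab by simp
  finally show ?thesis by (simp add: eq_neg_iff_add_eq_0)
qed

lemma U_inv:
  fixes a b :: "'a::field"
  assumes ab: "a^2 + b^2 = -1" and two: "(2::'a) \<noteq> 0"
  shows "fst x = a * U0 a b x + b * U1 a b x - a / 2 * U2 a b x"
    "fst (snd x) = b * U0 a b x - a * U1 a b x - b / 2 * U2 a b x"
    "snd (snd x) = U0 a b x + U2 a b x / 2"
proof -
  obtain x0 x1 x2 where x: "x = (x0, x1, x2)" by (cases x) auto
  have "a * U0 a b x + b * U1 a b x - a / 2 * U2 a b x = x0 - (a^2 + b^2 + 1) * x0"
    using two four_nz[OF two] by (simp add: x U0_def U1_def U2_def field_simps power2_eq_square)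
  thus "fst x = a * U0 a b x + b * U1 a b x - a / 2 * U2 a b x" using ab x by simp
  have "b * U0 a b x - a * U1 a b x - b / 2 * U2 a b x = x1 - (a^2 + b^2 + 1) * x1"
    using two four_nz[OF two] by (simp add: x U0_def U1_def U2_def field_simps power2_eq_square)
  thus "fst (snd x) = b * U0 a b x - a * U1 a b x - b / 2 * U2 a b x" using ab x by simp
  show "snd (snd x) = U0 a b x + U2 a b x / 2"
    using two four_nz[OF two] by (simp add: x U0_def U1_def U2_def field_simps)
qed

lemma U_prop:
  fixes a b :: "'a::field"
  assumes ab: "a^2 + b^2 = -1" and two: "(2::'a) \<noteq> 0"
    and h: "U0 a b x = t * U0 a b y" "U1 a b x = t * U1 a b y" "U2 a b x = t * U2 a b y"
  shows "x = (t * fst y, t * fst (snd y), t * snd (snd y))"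
proof -
  note i = U_inv[OF ab two]
  have "fst x = t * fst y"
  proof -
    have "fst x = a * U0 a b x + b * U1 a b x - a / 2 * U2 a b x" by (rule i(1))
    also have "\<dots> = t * (a * U0 a b y + b * U1 a b y - a / 2 * U2 a b y)" unfolding h by (simp add: algebra_simps)
    also have "\<dots> = t * fst y" using i(1)[of y] by simp
    finally show ?thesis .
  qed
  moreover have "fst (snd x) = t * fst (snd y)"
  proof -
    have "fst (snd x) = b * U0 a b x - a * U1 a b x - b / 2 * U2 a b x" by (rule i(2))
    also have "\<dots> = t * (b * U0 a b y - a * U1 a b y - b / 2 * U2 a b y)" unfolding h by (simp add: algebra_simps)
    also have "\<dots> = t * fst (snd y)" using i(2)[of y] by simp
    finally show ?thesis .
  qed
  moreover have "snd (snd x) = t * snd (snd y)"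
  proof -
    have "snd (snd x) = U0 a b x + U2 a b x / 2" by (rule i(3))
    also have "\<dots> = t * (U0 a b y + U2 a b y / 2)" unfolding h by (simp add: algebra_simps)
    also have "\<dots> = t * snd (snd y)" using i(3)[of y] by simp
    finally show ?thesis .
  qed
  ultimately show ?thesis by (cases x) auto
qed

lemma line3_scale:
  fixes y :: "'a::field \<times> 'a \<times> 'a"
  assumes "t \<noteq> 0"
  shows "line3 (t * fst y, t * fst (snd y), t * snd (snd y)) = line3 y"
proof (intro set_eqI iffI)
  fix v assume "v \<in> line3 (t * fst y, t * fst (snd y), t * snd (snd y))"
  then obtain c where "v = (c * (t * fst y), c * (t * fst (snd y)), c * (t * snd (snd y)))" by (auto simp: line3_def)
  thus "v \<in> line3 y" unfolding line3_def by (intro CollectI exI[of _ "c * t"]) (simp add: mult.assoc)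
next
  fix v assume "v \<in> line3 y"
  then obtain c where "v = (c * fst y, c * fst (snd y), c * snd (snd y))" by (auto simp: line3_def)
  thus "v \<in> line3 (t * fst y, t * fst (snd y), t * snd (snd y))" using assms unfolding line3_def
    by (intro CollectI exI[of _ "c / t"]) simp
qed

lemma line3_mem:
  fixes v :: "'a::field \<times> 'a \<times> 'a"
  assumes "x \<in> line3 v" "x \<noteq> (0,0,0)"
  shows "line3 x = line3 v"
proof -
  obtain c where x: "x = (c * fst v, c * fst (snd v), c * snd (snd v))" using assms(1) by (auto simp: line3_def)
  hence "c \<noteq> 0" using assms(2) by auto
  thus ?thesis using x line3_scale by simp
qed

definition erc :: "'a::field \<Rightarrow> 'a \<Rightarrow> ('a \<Rightarrow> 'a \<Rightarrow> nat) \<Rightarrow> nat \<Rightarrow> 'a \<times> 'a \<times> 'a \<Rightarrow> nat" where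
  "erc a b c N x = (if U0 a b x \<noteq> 0 then c (U1 a b x / U0 a b x) (U2 a b x / U0 a b x)
      else if U1 a b x \<noteq> 0 then N else 0)"

lemma ER_colorable:
  fixes a b :: "'a::field" and c :: "'a \<Rightarrow> 'a \<Rightarrow> nat"
  assumes ab: "a^2 + b^2 = -1" and two: "(2::'a) \<noteq> 0"
    and cb: "\<forall>x z. c x z < N"
    and cp: "\<forall>x z y w. z + w = x * y \<and> (x, z) \<noteq> (y, w) \<longrightarrow> c x z \<noteq> c y w"
  shows "colorable (ER_vertices :: ('a \<times> 'a \<times> 'a) set set) ER_adj (N + 1)"
proof -
  define pick :: "('a \<times> 'a \<times> 'a) set \<Rightarrow> 'a \<times> 'a \<times> 'a" where "pick X = (SOME x. x \<in> X \<and> x \<noteq> (0,0,0))" for X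
  have pick: "pick X \<in> X" "pick X \<noteq> (0,0,0)" "line3 (pick X) = X" if "X \<in> ER_vertices" for X
  proof -
    from that obtain v where v: "X = line3 v" "v \<noteq> (0,0,0)" by (auto simp: ER_vertices_def)
    have "v \<in> line3 v" unfolding line3_def by (intro CollectI exI[of _ 1]) simp
    hence "\<exists>x. x \<in> X \<and> x \<noteq> (0,0,0)" using v by blast
    hence p: "pick X \<in> X \<and> pick X \<noteq> (0,0,0)" unfolding pick_def by (rule someI_ex)
    thus "pick X \<in> X" "pick X \<noteq> (0,0,0)" by auto
    show "line3 (pick X) = X" using line3_mem[of "pick X" v] p v by simp
  qed
  define f where "f X = erc a b c N (pick X)" for X
  have U0z: "x = (0,0,0)" if "U0 a b x = 0" "U1 a b x = 0" "U2 a b x = 0" for x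
    using U_prop[OF ab two, of x 0 x] that by simp
  show ?thesis unfolding colorable_def
  proof (intro exI[of _ f] conjI ballI impI)
    fix X :: "('a \<times> 'a \<times> 'a) set" assume "X \<in> ER_vertices"
    show "f X < N + 1" using cb by (auto simp: f_def erc_def intro: less_SucI)
  next
    fix X Y :: "('a \<times> 'a \<times> 'a) set" assume XV: "X \<in> ER_vertices" and YV: "Y \<in> ER_vertices" and adj: "ER_adj X Y"
    define x where "x = pick X"
    define y where "y = pick Y"
    have x: "x \<in> X" "x \<noteq> (0,0,0)" "line3 x = X" using pick[OF XV] by (auto simp: x_def)
    have y: "y \<in> Y" "y \<noteq> (0,0,0)" "line3 y = Y" using pick[OF YV] by (auto simp: y_def)
    have XY: "X \<noteq> Y" and d: "dot3 x y = 0" using adj x y by (auto simp: ER_adj_def)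
    let ?u0 = "U0 a b x" let ?u1 = "U1 a b x" let ?u2 = "U2 a b x"
    let ?v0 = "U0 a b y" let ?v1 = "U1 a b y" let ?v2 = "U2 a b y"
    have beta: "?u1 * ?v1 - ?u0 * ?v2 - ?u2 * ?v0 = 0" using beta_id[OF ab two, of x y] d by simp
    have nprop: False if "?u0 = t * ?v0" "?u1 = t * ?v1" "?u2 = t * ?v2" for t
    proof -
      have xe: "x = (t * fst y, t * fst (snd y), t * snd (snd y))" by (rule U_prop[OF ab two that])
      hence "t \<noteq> 0" using x(2) by auto
      hence "line3 x = line3 y" using xe line3_scale by simp
      thus False using x y XY by simp
    qed
    have fx: "f X = erc a b c N x" and fy: "f Y = erc a b c N y" by (simp_all add: f_def x_def y_def)
    show "f X \<noteq> f Y" unfolding fx fy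
    proof (cases "?u0 = 0"; cases "?v0 = 0")
      assume u0: "?u0 \<noteq> 0" and v0: "?v0 \<noteq> 0"
      have rel: "?u2 / ?u0 + ?v2 / ?v0 = (?u1 / ?u0) * (?v1 / ?v0)"
        using beta u0 v0 by (simp add: field_simps)
      have ne: "(?u1 / ?u0, ?u2 / ?u0) \<noteq> (?v1 / ?v0, ?v2 / ?v0)"
      proof
        assume "(?u1 / ?u0, ?u2 / ?u0) = (?v1 / ?v0, ?v2 / ?v0)"
        hence "?u1 = (?u0 / ?v0) * ?v1" "?u2 = (?u0 / ?v0) * ?v2" using u0 v0 by (auto simp: field_simps)
        moreover have "?u0 = (?u0 / ?v0) * ?v0" using v0 by simp
        ultimately show False using nprop by blast
      qed
      show "erc a b c N x \<noteq> erc a b c N y" using cp rel ne u0 v0 by (simp add: erc_def)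
    next
      assume u0: "?u0 \<noteq> 0" and v0: "?v0 = 0"
      have "?v1 \<noteq> 0"
      proof
        assume v1: "?v1 = 0"
        hence "?v2 = 0" using beta u0 v0 by simp
        thus False using U0z[of y] v0 v1 y(2) by simp
      qed
      thus "erc a b c N x \<noteq> erc a b c N y" using u0 v0 cb by (simp add: erc_def) (metis less_irrefl)
    next
      assume u0: "?u0 = 0" and v0: "?v0 \<noteq> 0"
      have "?u1 \<noteq> 0"
      proof
        assume u1: "?u1 = 0"
        hence "?u2 = 0" using beta u0 v0 by simp
        thus False using U0z[of x] u0 u1 x(2) by simp
      qed
      thus "erc a b c N x \<noteq> erc a b c N y" using u0 v0 cb by (simp add: erc_def) (metis less_irrefl)
    next
      assume u0: "?u0 = 0" and v0: "?v0 = 0"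
      have "?u1 * ?v1 = 0" using beta u0 v0 by simp
      show "erc a b c N x \<noteq> erc a b c N y"
      proof (cases "?u1 = 0")
        case u1: True
        have "?u2 \<noteq> 0" using U0z[of x] u0 u1 x(2) by auto
        show ?thesis
        proof (cases "?v1 = 0")
          case True
          have "?v2 \<noteq> 0" using U0z[of y] v0 True y(2) by auto
          hence "?u0 = (?u2 / ?v2) * ?v0" "?u1 = (?u2 / ?v2) * ?v1" "?u2 = (?u2 / ?v2) * ?v2"
            using u0 v0 u1 True by auto
          thus ?thesis using nprop by blast
        next
          case False
          moreover have "N \<noteq> 0" using cb by (metis not_less0)
          ultimately show ?thesis using u0 v0 u1 by (simp add: erc_def)
        qed
      next
        case u1: False
        hence v1: "?v1 = 0" using \<open>?u1 * ?v1 = 0\<close> by simp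
        have "N \<noteq> 0" using cb by (metis not_less0)
        thus ?thesis using u0 v0 u1 v1 by (simp add: erc_def)
      qed
    qed
  qed
qed


lemma G_colorable:
  fixes c :: "'a::field \<Rightarrow> 'a \<Rightarrow> nat"
  assumes two: "(2::'a) \<noteq> 0" and cb: "\<forall>x z. c x z < N"
    and cp: "\<forall>x z y w. z + w = x * y \<and> (x, z) \<noteq> (y, w) \<longrightarrow> c x z \<noteq> c y w"
  shows "colorable (UNIV :: ('a \<times> 'a) set) G_adj N"
  unfolding colorable_def
proof (intro exI[of _ "\<lambda>v. c (2 * fst v) (2 * (snd v - (fst v)^2))"] conjI ballI impI)
  fix v :: "'a \<times> 'a" show "c (2 * fst v) (2 * (snd v - (fst v)^2)) < N" using cb by simp
next
  fix u v :: "'a \<times> 'a" assume "G_adj u v"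
  hence ne: "u \<noteq> v" and e: "(fst u + fst v)^2 = snd u + snd v" by (auto simp: G_adj_def)
  have "2 * (snd u - fst u^2) + 2 * (snd v - fst v^2) - (2 * fst u) * (2 * fst v)
      = 2 * ((snd u + snd v) - (fst u + fst v)^2)" by (simp add: algebra_simps power2_eq_square)
  hence rel: "2 * (snd u - fst u^2) + 2 * (snd v - fst v^2) = (2 * fst u) * (2 * fst v)" using e by simp
  have ne2: "(2 * fst u, 2 * (snd u - fst u^2)) \<noteq> (2 * fst v, 2 * (snd v - fst v^2))"
  proof
    assume "(2 * fst u, 2 * (snd u - fst u^2)) = (2 * fst v, 2 * (snd v - fst v^2))"
    hence "fst u = fst v" "snd u = snd v" using two by auto
    thus False using ne by (simp add: prod_eq_iff)
  qed
  show "c (2 * fst u) (2 * (snd u - (fst u)^2)) \<noteq> c (2 * fst v) (2 * (snd v - (fst v)^2))"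
    using cp rel ne2 by blast
qed

theorem theorem5p1:
  fixes q :: nat
  assumes "\<exists>p k. prime p \<and> odd p \<and> k \<ge> 1 \<and> q = p ^ k"
    and "card (UNIV :: 'a::{field,finite} set) = q ^ 3"
  shows "chromatic_number (UNIV :: ('a \<times> 'a) set) G_adj \<le> 6 * q^2
       \<and> chromatic_number (ER_vertices :: ('a \<times> 'a \<times> 'a) set set) ER_adj \<le> 6 * q^2 + 1"
proof -
  obtain p k where pk: "prime p" "odd p" "k \<ge> 1" "q = p^k" using assms(1) by blast
  note cf = assms(2)
  obtain c :: "'a \<Rightarrow> 'a \<Rightarrow> nat" where cb: "\<forall>a z. c a z < 6 * q^2"
    and cp: "\<forall>a z b w. z + w = a * b \<and> (a, z) \<noteq> (b, w) \<longrightarrow> c a z \<noteq> c b w"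
    using core_exists[OF pk cf] by blast
  have two: "(2::'a) \<noteq> 0" using two_nz[OF pk cf] .
  obtain a b :: 'a where ab: "a^2 + b^2 = -1" using two_squares[OF pk cf] by blast
  have "colorable (UNIV::('a \<times> 'a) set) G_adj (6 * q^2)" by (rule G_colorable[OF two cb cp])
  hence g: "chromatic_number (UNIV::('a \<times> 'a) set) G_adj \<le> 6 * q^2"
    unfolding chromatic_number_def by (rule Least_le)
  have "colorable (ER_vertices::('a \<times> 'a \<times> 'a) set set) ER_adj (6 * q^2 + 1)"
    by (rule ER_colorable[OF ab two cb cp])
  hence "chromatic_number (ER_vertices::('a \<times> 'a \<times> 'a) set set) ER_adj \<le> 6 * q^2 + 1"
    unfolding chromatic_number_def by (rule Least_le)
  with g show ?thesis by simp
qed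

end
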